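(* Let $F \in \mathbb{C}^{n \times n}$ be a unitary matrix and let $y = F\hat{x} + e$, where $\hat{x} \in \mathbb{C}^{n}$ is $k$-sparse and $e \in \mathbb{C}^{n}$. If $\|e\|_2 \leq \eta$, then any solution $x^{\#}$ of the Basis Pursuit problem $\min_{z \in \mathbb{C}^n}\|z\|_1$ subject to $\|Fz - y\|_2 \leq \eta$ satisfies $$\| x^{\#}-\hat{x}\|_1 \leq 4\sqrt{k}\,\eta \quad\text{and}\quad \| x^{\#}-\hat{x}\|_2 \leq 6\eta .$$
   Context: A vector is $k$-sparse if it has at most $k$ nonzero entries. *)

theory Defs
  imports "HOL-Analysis.Analysis"
begin

definition adjoint_mat :: "complex ^'n ^'m \<Rightarrow> complex ^'m ^'n" where
  "adjoint_mat F = (\<chi> i j. cnj (F $ j $ i))"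

definition unitary_mat :: "complex ^'n ^'n \<Rightarrow> bool" where
  "unitary_mat F \<longleftrightarrow> adjoint_mat F ** F = mat 1 \<and> F ** adjoint_mat F = mat 1"

text \<open>The l1 norm; the l2 norm is the library norm on complex^'n.\<close>
definition l1_norm :: "complex ^'n \<Rightarrow> real" where
  "l1_norm x = (\<Sum>i\<in>UNIV. cmod (x $ i))"

definition sparse :: "nat \<Rightarrow> complex ^'n \<Rightarrow> bool" where
  "sparse k x \<longleftrightarrow> card {i. x $ i \<noteq> 0} \<le> k"

definition bp_solution :: "complex ^'n ^'n \<Rightarrow> complex ^'n \<Rightarrow> real \<Rightarrow> complex ^'n \<Rightarrow> bool" where
  "bp_solution F y \<eta> x \<longleftrightarrow> norm (F *v x - y) \<le> \<eta> \<and>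
     (\<forall>z. norm (F *v z - y) \<le> \<eta> \<longrightarrow> l1_norm x \<le> l1_norm z)"

end

theory Submission
  imports Defs
begin

lemma norm_sq_vec: "(norm (x::complex^'n))^2 = (\<Sum>i\<in>UNIV. (cmod (x$i))^2)"
  by (simp add: norm_vec_def L2_set_def sum_nonneg)

lemma cnorm_sq: "complex_of_real ((norm (x::complex^'n))^2) = (\<Sum>i\<in>UNIV. x$i * cnj (x$i))"
  unfolding norm_sq_vec of_real_sum by (rule sum.cong[OF refl], rule complex_norm_square)

lemma unitary_iso:
  fixes F :: "complex^'n^'n"
  assumes "unitary_mat F"
  shows "norm (F *v v) = norm v"
proof -
  have A: "(\<Sum>i\<in>UNIV. cnj (F$i$l) * F$i$j) = (if l = j then 1 else 0)" for l j :: 'n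
  proof -
    have "(adjoint_mat F ** F) $ l $ j = (mat 1 :: complex^'n^'n) $ l $ j"
      using assms unfolding unitary_mat_def by simp
    thus ?thesis by (simp add: matrix_matrix_mult_def adjoint_mat_def mat_def)
  qed
  have "(\<Sum>i\<in>UNIV. (F *v v)$i * cnj ((F *v v)$i))
      = (\<Sum>i\<in>UNIV. (\<Sum>j\<in>UNIV. F$i$j * v$j) * (\<Sum>l\<in>UNIV. cnj (F$i$l) * cnj (v$l)))"
    by (simp add: matrix_vector_mult_def)
  also have "\<dots> = (\<Sum>i\<in>UNIV. \<Sum>j\<in>UNIV. \<Sum>l\<in>UNIV. (v$j * cnj (v$l)) * (cnj (F$i$l) * F$i$j))"
    unfolding sum_product by (intro sum.cong refl) (simp add: mult_ac)
  also have "\<dots> = (\<Sum>j\<in>UNIV. \<Sum>l\<in>UNIV. (v$j * cnj (v$l)) * (\<Sum>i\<in>UNIV. cnj (F$i$l) * F$i$j))"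
  proof -
    have "(\<Sum>i\<in>UNIV. \<Sum>j\<in>UNIV. \<Sum>l\<in>UNIV. (v$j * cnj (v$l)) * (cnj (F$i$l) * F$i$j))
       = (\<Sum>j\<in>UNIV. \<Sum>i\<in>UNIV. \<Sum>l\<in>UNIV. (v$j * cnj (v$l)) * (cnj (F$i$l) * F$i$j))"
      by (rule sum.swap)
    also have "\<dots> = (\<Sum>j\<in>UNIV. \<Sum>l\<in>UNIV. \<Sum>i\<in>UNIV. (v$j * cnj (v$l)) * (cnj (F$i$l) * F$i$j))"
      by (rule sum.cong[OF refl], rule sum.swap)
    finally show ?thesis by (simp add: sum_distrib_left)
  qed
  also have "\<dots> = (\<Sum>j\<in>UNIV. v$j * cnj (v$j))"
    by (simp add: A if_distrib cong: if_cong)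
  finally have "complex_of_real ((norm (F *v v))^2) = complex_of_real ((norm v)^2)"
    by (simp only: cnorm_sq)
  hence "(norm (F *v v))^2 = (norm v)^2" using of_real_eq_iff by blast
  thus ?thesis by (simp add: power2_eq_iff_nonneg)
qed

theorem theorem3:
  fixes F :: "complex ^'n ^'n" and xhat e y xs :: "complex ^'n"
    and k :: nat and \<eta> :: real
  assumes "unitary_mat F"
    and "sparse k xhat"
    and "y = F *v xhat + e"
    and "norm e \<le> \<eta>"
    and "bp_solution F y \<eta> xs"
  shows "l1_norm (xs - xhat) \<le> 4 * sqrt (real k) * \<eta> \<and> norm (xs - xhat) \<le> 6 * \<eta>"
proof -
  define h where "h = xs - xhat"
  have feas: "norm (F *v xs - y) \<le> \<eta>" and opt: "\<And>z. norm (F *v z - y) \<le> \<eta> \<Longrightarrow> l1_norm xs \<le> l1_norm z"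
    using assms(5) unfolding bp_solution_def by auto
  have eta0: "0 \<le> \<eta>" using assms(4) norm_ge_zero order_trans by blast
  have "F *v h = (F *v xs - y) + e"
    using assms(3) by (simp add: h_def matrix_vector_mult_diff_distrib)
  hence "norm (F *v h) \<le> norm (F *v xs - y) + norm e" by (metis norm_triangle_ineq)
  hence h2: "norm h \<le> 2 * \<eta>" using unitary_iso[OF assms(1)] feas assms(4) by simp
  have "norm (F *v xhat - y) \<le> \<eta>" using assms(3,4) by simp
  hence l1: "l1_norm xs \<le> l1_norm xhat" by (rule opt)
  define S where "S = {i. xhat $ i \<noteq> 0}"
  have cS: "card S \<le> k" using assms(2) by (simp add: sparse_def S_def)
  have split: "l1_norm v = (\<Sum>i\<in>S. cmod (v$i)) + (\<Sum>i\<in>-S. cmod (v$i))" for v :: "complex^'n"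
  proof -
    have "(\<Sum>i\<in>UNIV. cmod (v$i)) = (\<Sum>i\<in>S \<union> -S. cmod (v$i))" by simp
    also have "\<dots> = (\<Sum>i\<in>S. cmod (v$i)) + (\<Sum>i\<in>-S. cmod (v$i))"
      by (rule sum.union_disjoint) auto
    finally show ?thesis unfolding l1_norm_def .
  qed
  have xsS: "(\<Sum>i\<in>S. cmod (xs$i)) \<ge> (\<Sum>i\<in>S. cmod (xhat$i)) - (\<Sum>i\<in>S. cmod (h$i))"
  proof -
    have "(\<Sum>i\<in>S. cmod (xhat$i)) \<le> (\<Sum>i\<in>S. cmod (xs$i) + cmod (h$i))"
    proof (rule sum_mono)
      fix i
      have "xhat$i = xs$i - h$i" by (simp add: h_def)
      thus "cmod (xhat$i) \<le> cmod (xs$i) + cmod (h$i)" by (metis norm_triangle_ineq4)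
    qed
    thus ?thesis by (simp add: sum.distrib)
  qed
  have xhatc: "(\<Sum>i\<in>-S. cmod (xhat$i)) = 0" by (simp add: S_def)
  have xsc: "(\<Sum>i\<in>-S. cmod (xs$i)) = (\<Sum>i\<in>-S. cmod (h$i))"
    by (rule sum.cong) (auto simp: S_def h_def)
  have cone: "(\<Sum>i\<in>-S. cmod (h$i)) \<le> (\<Sum>i\<in>S. cmod (h$i))"
    using l1 split[of xs] split[of xhat] xsS xhatc xsc by linarith
  have "(\<Sum>i\<in>S. \<bar>cmod (h$i)\<bar> * \<bar>1\<bar>) \<le> L2_set (\<lambda>i. cmod (h$i)) S * L2_set (\<lambda>i. 1) S"
    by (rule L2_set_mult_ineq)
  hence cs: "(\<Sum>i\<in>S. cmod (h$i)) \<le> L2_set (\<lambda>i. cmod (h$i)) S * sqrt (card S)"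
    by (simp add: L2_set_constant)
  have "L2_set (\<lambda>i. cmod (h$i)) S \<le> L2_set (\<lambda>i. cmod (h$i)) UNIV"
    unfolding L2_set_def by (rule real_sqrt_le_mono, rule sum_mono2) auto
  hence "L2_set (\<lambda>i. cmod (h$i)) S \<le> norm h" by (simp add: norm_vec_def)
  hence "L2_set (\<lambda>i. cmod (h$i)) S \<le> 2 * \<eta>" using h2 by linarith
  moreover have "sqrt (card S) \<le> sqrt k" using cS by simp
  ultimately have "L2_set (\<lambda>i. cmod (h$i)) S * sqrt (card S) \<le> (2 * \<eta>) * sqrt k"
    using eta0 by (intro mult_mono) auto
  hence "(\<Sum>i\<in>S. cmod (h$i)) \<le> 2 * \<eta> * sqrt k" using cs by linarith
  moreover have "2 * (2 * \<eta> * sqrt k) = 4 * sqrt k * \<eta>" by simp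
  ultimately have "l1_norm h \<le> 4 * sqrt k * \<eta>" using split[of h] cone by linarith
  thus ?thesis using h2 eta0 h_def by simp
qed

end
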